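(* Let $\langle S\mid R\rangle\cong\mathbb{Z}^n$ be a 3-presentation, and suppose $g^ah^b$ represents the identity in $\langle S\mid R\rangle$, where $g,h\in S$ are distinct and $a,b$ are nonzero, relatively prime integers. Let $i$ be a new generator not in $S$, let $S'=(S\cup\{i\})\setminus\{g,h\}$, and let $R'$ be obtained from $R$ by replacing every occurrence of $g$ by $i^{b}$ and every occurrence of $h$ by $i^{-a}$ in each relation. Then $\langle S'\mid R'\rangle$ is a 3-presentation and $\langle S'\mid R'\rangle\cong\mathbb{Z}^n$.
   Context: A 3-presentation of a group $G$ is a group presentation $\langle S\mid R\rangle\cong G$ (with $S,R$ finite) in which each relation in $R$ is either the empty word, or $g^a$, or $g^ah^b$, or $g^ah^bi^c$, where $g,h,i\in S$ (not necessarily distinct) and $a,b,c\in\mathbb{Z}$ (after substitution, a product such as $(i^b)^{a'}(i^{-a})^{b'}$ is read as a single power of $i$). *)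

theory Defs
  imports "HOL-Algebra.Algebra"
begin

text \<open>A word in the generators: a list of syllables (x, k) standing for x^k.\<close>
type_synonym 'a word = "('a \<times> int) list"

definition word_on :: "'a set \<Rightarrow> 'a word \<Rightarrow> bool" where
  "word_on S w \<longleftrightarrow> fst ` set w \<subseteq> S"

inductive pres_eq :: "'a set \<Rightarrow> 'a word set \<Rightarrow> 'a word \<Rightarrow> 'a word \<Rightarrow> bool"
  for S :: "'a set" and R :: "'a word set" where
  refl: "word_on S w \<Longrightarrow> pres_eq S R w w"
| sym: "pres_eq S R u v \<Longrightarrow> pres_eq S R v u"
| trans: "pres_eq S R u v \<Longrightarrow> pres_eq S R v w \<Longrightarrow> pres_eq S R u w"
| app: "pres_eq S R u u' \<Longrightarrow> pres_eq S R v v' \<Longrightarrow> pres_eq S R (u @ v) (u' @ v')"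
| merge: "x \<in> S \<Longrightarrow> pres_eq S R [(x, a), (x, b)] [(x, a + b)]"
| zero: "x \<in> S \<Longrightarrow> pres_eq S R [(x, 0)] []"
| rel: "r \<in> R \<Longrightarrow> word_on S r \<Longrightarrow> pres_eq S R r []"

definition pres_class :: "'a set \<Rightarrow> 'a word set \<Rightarrow> 'a word \<Rightarrow> 'a word set" where
  "pres_class S R w = {v. pres_eq S R w v}"

definition pres_group :: "'a set \<Rightarrow> 'a word set \<Rightarrow> 'a word set monoid" where
  "pres_group S R =
     \<lparr> carrier = {pres_class S R w | w. word_on S w},
       monoid.mult = (\<lambda>A B. {w. \<exists>u\<in>A. \<exists>v\<in>B. pres_eq S R (u @ v) w}),
       one = pres_class S R [] \<rparr>"

definition three_presentation :: "'a set \<Rightarrow> 'a word set \<Rightarrow> bool" where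
  "three_presentation S R \<longleftrightarrow> finite S \<and> finite R \<and>
     (\<forall>r\<in>R. word_on S r \<and> length r \<le> 3)"

definition Zn :: "nat \<Rightarrow> (nat \<Rightarrow> int) monoid" where
  "Zn n = product_group {..<n} (\<lambda>_. integer_group)"

definition subst_syl :: "'a \<Rightarrow> 'a \<Rightarrow> 'a \<Rightarrow> int \<Rightarrow> int \<Rightarrow> 'a \<times> int \<Rightarrow> 'a \<times> int" where
  "subst_syl g h i a b s =
     (if fst s = g then (i, b * snd s) else if fst s = h then (i, - a * snd s) else s)"

definition subst_word :: "'a \<Rightarrow> 'a \<Rightarrow> 'a \<Rightarrow> int \<Rightarrow> int \<Rightarrow> 'a word \<Rightarrow> 'a word" where
  "subst_word g h i a b w = map (subst_syl g h i a b) w"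

end

theory Submission
  imports Defs
begin

lemma word_on_append[simp]: "word_on S (u @ v) \<longleftrightarrow> word_on S u \<and> word_on S v"
  by (auto simp: word_on_def)
lemma word_on_Cons[simp]: "word_on S (s # v) \<longleftrightarrow> fst s \<in> S \<and> word_on S v"
  by (auto simp: word_on_def)
lemma word_on_Nil[simp]: "word_on S []"
  by (auto simp: word_on_def)

lemma pres_eq_word_on: "pres_eq S R u v \<Longrightarrow> word_on S u \<and> word_on S v"
  by (induction rule: pres_eq.induct) auto

lemma pres_class_eq:
  assumes "word_on S u" "word_on S v"
  shows "pres_class S R u = pres_class S R v \<longleftrightarrow> pres_eq S R u v"
proof
  assume "pres_class S R u = pres_class S R v"
  moreover have "v \<in> pres_class S R v" using assms by (simp add: pres_class_def pres_eq.refl)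
  ultimately show "pres_eq S R u v" by (simp add: pres_class_def) blast
next
  assume h: "pres_eq S R u v"
  show "pres_class S R u = pres_class S R v"
    unfolding pres_class_def using h pres_eq.sym pres_eq.trans by blast
qed

lemma pres_class_mult:
  assumes "word_on S u" "word_on S v"
  shows "pres_class S R u \<otimes>\<^bsub>pres_group S R\<^esub> pres_class S R v = pres_class S R (u @ v)"
proof -
  have "{w. \<exists>u'\<in>pres_class S R u. \<exists>v'\<in>pres_class S R v. pres_eq S R (u' @ v') w}
       = pres_class S R (u @ v)"
    apply (auto simp: pres_class_def set_eq_iff)
     apply (meson pres_eq.app pres_eq.trans)
    using assms by (meson pres_eq.refl)
  then show ?thesis by (simp add: pres_group_def)
qed

definition vecE :: "('a \<Rightarrow> nat \<Rightarrow> int) \<Rightarrow> 'a word \<Rightarrow> nat \<Rightarrow> int" where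
  "vecE E w j = sum_list (map (\<lambda>s. snd s * E (fst s) j) w)"

definition vr :: "nat \<Rightarrow> ('a \<Rightarrow> nat \<Rightarrow> int) \<Rightarrow> 'a word \<Rightarrow> nat \<Rightarrow> int" where
  "vr n E w = (\<lambda>j\<in>{..<n}. vecE E w j)"

lemma vecE_simps[simp]: "vecE E [] j = 0" "vecE E (s # w) j = snd s * E (fst s) j + vecE E w j"
  "vecE E (u @ v) j = vecE E u j + vecE E v j"
  by (auto simp: vecE_def)

lemma vr_eq: "vr n E u = vr n E v \<longleftrightarrow> (\<forall>j<n. vecE E u j = vecE E v j)"
  by (auto simp: vr_def restrict_def fun_eq_iff)

lemma carrier_Zn: "carrier (Zn n) = (\<Pi>\<^sub>E j\<in>{..<n}. UNIV)"
  by (simp add: Zn_def)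
lemma mult_Zn: "x \<otimes>\<^bsub>Zn n\<^esub> y = (\<lambda>j\<in>{..<n}. x j + y j)"
  by (simp add: Zn_def)

lemma vr_carrier: "vr n E w \<in> carrier (Zn n)"
  by (simp add: carrier_Zn vr_def)

lemma vr_append: "vr n E (u @ v) = vr n E u \<otimes>\<^bsub>Zn n\<^esub> vr n E v"
  by (auto simp: mult_Zn vr_def restrict_def fun_eq_iff)


lemma int_additive_linear:
  fixes f :: "int \<Rightarrow> int"
  assumes add: "\<And>a b. f (a + b) = f a + f b"
  shows "f k = k * f 1"
proof -
  have f0: "f 0 = 0" using add[of 0 0] by simp
  have nat: "f (int m) = int m * f 1" for m
    by (induction m) (auto simp: f0 add distrib_right add[of "int _" 1, simplified])
  show ?thesis
  proof (cases "k \<ge> 0")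
    case True then show ?thesis using nat[of "nat k"] by simp
  next
    case False
    have "f k + f (-k) = 0" using add[of k "-k"] f0 by simp
    moreover have "f (-k) = (-k) * f 1" using nat[of "nat (-k)"] False by simp
    ultimately show ?thesis by simp
  qed
qed

lemma carrier_pres_group: "carrier (pres_group S R) = {pres_class S R w | w. word_on S w}"
  by (simp add: pres_group_def)

lemma iso_to_vec:
  assumes "pres_group S R \<cong> Zn n"
  obtains E where "\<And>u v. word_on S u \<Longrightarrow> word_on S v \<Longrightarrow> pres_eq S R u v \<longleftrightarrow> vr n E u = vr n E v"
    and "\<And>z. z \<in> carrier (Zn n) \<Longrightarrow> \<exists>w. word_on S w \<and> z = vr n E w"
proof -
  obtain \<phi> where phi: "\<phi> \<in> iso (pres_group S R) (Zn n)" using assms by (auto simp: is_iso_def)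
  then have hom: "\<phi> \<in> hom (pres_group S R) (Zn n)"
    and bij: "bij_betw \<phi> (carrier (pres_group S R)) (carrier (Zn n))" by (auto simp: iso_def)
  define \<psi> where "\<psi> w = \<phi> (pres_class S R w)" for w
  have cls: "word_on S w \<Longrightarrow> pres_class S R w \<in> carrier (pres_group S R)" for w
    by (auto simp: carrier_pres_group)
  have car: "word_on S w \<Longrightarrow> \<psi> w \<in> carrier (Zn n)" for w
    using hom cls unfolding \<psi>_def by (simp add: hom_in_carrier)
  have app: "word_on S u \<Longrightarrow> word_on S v \<Longrightarrow> \<psi> (u @ v) = \<psi> u \<otimes>\<^bsub>Zn n\<^esub> \<psi> v" for u v
    unfolding \<psi>_def using hom cls pres_class_mult[of S u v R, symmetric] by (simp add: hom_mult)
  have appj: "word_on S u \<Longrightarrow> word_on S v \<Longrightarrow> j < n \<Longrightarrow> \<psi> (u @ v) j = \<psi> u j + \<psi> v j" for u v j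
    using app by (simp add: mult_Zn)
  have inj: "inj_on \<phi> (carrier (pres_group S R))" using bij by (simp add: bij_betw_def)
  have eq: "word_on S u \<Longrightarrow> word_on S v \<Longrightarrow> \<psi> u = \<psi> v \<longleftrightarrow> pres_eq S R u v" for u v
    unfolding \<psi>_def using inj cls pres_class_eq[of S u v R] by (metis inj_on_eq_iff)
  have nil: "j < n \<Longrightarrow> \<psi> [] j = 0" for j
    using appj[of "[]" "[]" j] by simp
  define E where "E x j = \<psi> [(x, 1)] j" for x j
  have syl: "x \<in> S \<Longrightarrow> j < n \<Longrightarrow> \<psi> [(x, k)] j = k * E x j" for x k j
  proof -
    assume x: "x \<in> S" and j: "j < n"
    have "(\<lambda>k. \<psi> [(x, k)] j) (a + b) = (\<lambda>k. \<psi> [(x, k)] j) a + (\<lambda>k. \<psi> [(x, k)] j) b" for a b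
    proof -
      have "\<psi> ([(x, a)] @ [(x, b)]) = \<psi> [(x, a + b)]"
        using eq[of "[(x, a)] @ [(x, b)]" "[(x, a + b)]"] x pres_eq.merge[of x S R a b] by simp
      then show ?thesis using appj[of "[(x, a)]" "[(x, b)]" j] x j by simp
    qed
    then have "\<psi> [(x, k)] j = k * \<psi> [(x, 1)] j"
      by (rule int_additive_linear[of "\<lambda>k. \<psi> [(x, k)] j"])
    then show ?thesis by (simp add: E_def)
  qed
  have vec: "word_on S w \<Longrightarrow> j < n \<Longrightarrow> \<psi> w j = vecE E w j" for w j
  proof (induction w)
    case Nil then show ?case by (simp add: nil)
  next
    case (Cons s w)
    obtain x k where s: "s = (x, k)" by (cases s)
    have "\<psi> (s # w) j = \<psi> ([s] @ w) j" by simp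
    also have "\<dots> = \<psi> [s] j + \<psi> w j" using Cons.prems by (intro appj) auto
    finally show ?case using Cons syl s by simp
  qed
  have psivr: "word_on S w \<Longrightarrow> \<psi> w = vr n E w" for w
  proof -
    assume w: "word_on S w"
    have "\<psi> w \<in> (\<Pi>\<^sub>E j\<in>{..<n}. UNIV)" using car[OF w] by (simp add: carrier_Zn)
    then show ?thesis using vec[OF w] by (auto simp: vr_def fun_eq_iff PiE_def extensional_def)
  qed
  show ?thesis
  proof (rule that)
    fix u v assume "word_on S u" "word_on S v"
    then show "pres_eq S R u v \<longleftrightarrow> vr n E u = vr n E v" using eq psivr by metis
  next
    fix z assume z: "z \<in> carrier (Zn n)"
    then obtain C where "C \<in> carrier (pres_group S R)" "z = \<phi> C"
      using bij by (metis bij_betw_def imageE)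
    then obtain w where "word_on S w" "z = \<psi> w" by (auto simp: carrier_pres_group \<psi>_def)
    then show "\<exists>w. word_on S w \<and> z = vr n E w" using psivr by auto
  qed
qed

lemma vec_to_iso:
  assumes char: "\<And>u v. word_on S u \<Longrightarrow> word_on S v \<Longrightarrow> pres_eq S R u v \<longleftrightarrow> vr n E u = vr n E v"
    and surj: "\<And>z. z \<in> carrier (Zn n) \<Longrightarrow> \<exists>w. word_on S w \<and> z = vr n E w"
  shows "pres_group S R \<cong> Zn n"
proof -
  define \<phi> where "\<phi> C = vr n E (SOME w. w \<in> C)" for C
  have phicl: "word_on S w \<Longrightarrow> \<phi> (pres_class S R w) = vr n E w" for w
  proof -
    assume w: "word_on S w"
    have "w \<in> pres_class S R w" using w by (simp add: pres_class_def pres_eq.refl)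
    then have "(SOME w'. w' \<in> pres_class S R w) \<in> pres_class S R w" by (rule someI)
    then have p: "pres_eq S R w (SOME w'. w' \<in> pres_class S R w)" by (simp add: pres_class_def)
    then show ?thesis unfolding \<phi>_def using char pres_eq_word_on[OF p] by metis
  qed
  have "\<phi> \<in> iso (pres_group S R) (Zn n)"
  proof (rule isoI)
    show "\<phi> \<in> hom (pres_group S R) (Zn n)"
    proof (rule homI)
      fix x assume "x \<in> carrier (pres_group S R)"
      then show "\<phi> x \<in> carrier (Zn n)" by (auto simp: carrier_pres_group phicl vr_carrier)
    next
      fix x y assume "x \<in> carrier (pres_group S R)" "y \<in> carrier (pres_group S R)"
      then obtain u v where "x = pres_class S R u" "y = pres_class S R v" "word_on S u" "word_on S v"
        by (auto simp: carrier_pres_group)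
      then show "\<phi> (x \<otimes>\<^bsub>pres_group S R\<^esub> y) = \<phi> x \<otimes>\<^bsub>Zn n\<^esub> \<phi> y"
        by (simp add: pres_class_mult phicl vr_append)
    qed
  next
    show "bij_betw \<phi> (carrier (pres_group S R)) (carrier (Zn n))"
    proof (rule bij_betw_imageI)
      show "inj_on \<phi> (carrier (pres_group S R))"
      proof (rule inj_onI)
        fix x y assume "x \<in> carrier (pres_group S R)" "y \<in> carrier (pres_group S R)" "\<phi> x = \<phi> y"
        then obtain u v where "x = pres_class S R u" "y = pres_class S R v" "word_on S u" "word_on S v"
          "\<phi> x = \<phi> y"
          by (auto simp: carrier_pres_group)
        then show "x = y" using phicl char pres_class_eq by metis
      qed
    next
      show "\<phi> ` carrier (pres_group S R) = carrier (Zn n)"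
      proof
        show "\<phi> ` carrier (pres_group S R) \<subseteq> carrier (Zn n)"
          by (auto simp: carrier_pres_group phicl vr_carrier)
        show "carrier (Zn n) \<subseteq> \<phi> ` carrier (pres_group S R)"
        proof
          fix z assume "z \<in> carrier (Zn n)"
          then obtain w where "word_on S w" "z = vr n E w" using surj by blast
          then show "z \<in> \<phi> ` carrier (pres_group S R)"
            by (auto simp: carrier_pres_group phicl intro!: image_eqI[of _ _ "pres_class S R w"])
        qed
      qed
    qed
  qed
  then show ?thesis by (rule is_isoI)
qed


lemma subst_word_simps[simp]:
  "subst_word g h i a b [] = []"
  "subst_word g h i a b (s # w) = subst_syl g h i a b s # subst_word g h i a b w"
  "subst_word g h i a b (u @ w) = subst_word g h i a b u @ subst_word g h i a b w"
  "length (subst_word g h i a b w) = length w"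
  by (auto simp: subst_word_def)

lemma arith1: "a*G + b*H = 0 \<Longrightarrow> p*a + q*b = 1 \<Longrightarrow> b*k*(q*G - p*H) = k*(G::int)"
proof -
  assume h1: "a*G + b*H = 0" and h2: "p*a + q*b = 1"
  have "b*k*(q*G - p*H) = k*G*(p*a+q*b) - k*p*(a*G+b*H)" by (simp add: algebra_simps)
  then show ?thesis using h1 h2 by simp
qed

lemma arith2: "a*G + b*H = 0 \<Longrightarrow> p*a + q*b = 1 \<Longrightarrow> -a*k*(q*G - p*H) = k*(H::int)"
proof -
  assume h1: "a*G + b*H = 0" and h2: "p*a + q*b = 1"
  have "-a*k*(q*G - p*H) = k*H*(p*a+q*b) - k*q*(a*G+b*H)" by (simp add: algebra_simps)
  then show ?thesis using h1 h2 by simp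
qed

theorem mainTheorem10:
  fixes S :: "'a set" and R :: "'a word set" and g h i :: 'a and a b :: int and n :: nat
  assumes "three_presentation S R"
    and "pres_group S R \<cong> Zn n"
    and "g \<in> S" and "h \<in> S" and "g \<noteq> h"
    and "a \<noteq> 0" and "b \<noteq> 0" and "coprime a b"
    and "pres_eq S R [(g, a), (h, b)] []"
    and "i \<notin> S"
  shows "three_presentation ((S \<union> {i}) - {g, h}) (subst_word g h i a b ` R)
    \<and> pres_group ((S \<union> {i}) - {g, h}) (subst_word g h i a b ` R) \<cong> Zn n"
proof -
  note tp = assms(1) and gS = assms(3) and hS = assms(4) and gh = assms(5)
    and rgh = assms(9) and iS = assms(10)
  define S' where "S' = (S \<union> {i}) - {g, h}"
  define F where "F = subst_word g h i a b"
  define R' where "R' = F ` R"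
  have ig: "i \<noteq> g" "i \<noteq> h" using iS gS hS by auto
  have iS': "i \<in> S'" using ig by (simp add: S'_def)
  obtain p q where pq: "p * a + q * b = 1"
    using bezout_int[of a b] assms(8) by (auto simp: coprime_iff_gcd_eq_1)
  obtain E where char: "\<And>u v. word_on S u \<Longrightarrow> word_on S v \<Longrightarrow> pres_eq S R u v \<longleftrightarrow> vr n E u = vr n E v"
    and surj: "\<And>z. z \<in> carrier (Zn n) \<Longrightarrow> \<exists>w. word_on S w \<and> z = vr n E w"
    using iso_to_vec[OF assms(2)] by blast
  have rel0: "a * E g j + b * E h j = 0" if "j < n" for j
  proof -
    have "vr n E [(g, a), (h, b)] = vr n E []" using char rgh gS hS by simp
    then show ?thesis using that by (simp add: vr_eq)
  qed
  define E' where "E' x = (if x = i then (\<lambda>j. q * E g j - p * E h j) else E x)" for x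
  define Hs where "Hs s = (if fst s = i then [(g, q * snd s), (h, - p * snd s)] else [s])" for s :: "'a \<times> int"
  define H where "H w = concat (map Hs w)" for w
  have H_simps[simp]: "H [] = []" "H (s # w) = Hs s @ H w" "H (u @ w) = H u @ H w" for s u w
    by (auto simp: H_def)
  have wF: "word_on S w \<Longrightarrow> word_on S' (F w)" for w
    using ig by (induction w) (auto simp: F_def subst_syl_def S'_def)
  have wH: "word_on S' w \<Longrightarrow> word_on S (H w)" for w
    by (induction w) (auto simp: Hs_def S'_def gS hS)
  have vecF: "word_on S w \<Longrightarrow> j < n \<Longrightarrow> vecE E' (F w) j = vecE E w j" for w j
  proof (induction w)
    case Nil then show ?case by (simp add: F_def)
  next
    case (Cons s w)
    obtain x k where s: "s = (x, k)" by (cases s)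
    have xi: "x \<noteq> i" using Cons.prems iS s by auto
    have "vecE E' (F [s]) j = vecE E [s] j"
      using arith1[OF rel0[OF Cons.prems(2)] pq, of k] arith2[OF rel0[OF Cons.prems(2)] pq, of k] xi gh
      by (auto simp: s F_def subst_syl_def E'_def)
    then show ?case using Cons by (simp add: F_def)
  qed
  have vecH: "vecE E (H w) j = vecE E' w j" for w j
  proof (induction w)
    case Nil then show ?case by simp
  next
    case (Cons s w)
    have "vecE E (Hs s) j = vecE E' [s] j"
      by (auto simp: Hs_def E'_def algebra_simps)
    then show ?case using Cons by simp
  qed
  have presF: "pres_eq S R u v \<Longrightarrow> pres_eq S' R' (F u) (F v)" for u v
  proof (induction rule: pres_eq.induct)
    case (refl w) then show ?case using wF by (simp add: pres_eq.refl)
  next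
    case (sym u v) then show ?case by (blast intro: pres_eq.sym)
  next
    case (trans u v w) then show ?case by (blast intro: pres_eq.trans)
  next
    case (app u u' v v') then show ?case by (simp add: F_def pres_eq.app)
  next
    case (merge x a1 b1)
    show ?case
    proof (cases "x = g \<or> x = h")
      case True
      then show ?thesis using pres_eq.merge[OF iS', of R' "b * a1" "b * b1"]
        pres_eq.merge[OF iS', of R' "- a * a1" "- a * b1"] gh
        by (auto simp: F_def subst_syl_def distrib_left)
    next
      case False
      then have "x \<in> S'" using merge by (simp add: S'_def)
      then show ?thesis using False pres_eq.merge[of x S' R' a1 b1]
        by (auto simp: F_def subst_syl_def)
    qed
  next
    case (zero x)
    show ?case
    proof (cases "x = g \<or> x = h")
      case True
      then show ?thesis using pres_eq.zero[OF iS', of R'] gh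
        by (auto simp: F_def subst_syl_def)
    next
      case False
      then have "x \<in> S'" using zero by (simp add: S'_def)
      then show ?thesis using False pres_eq.zero[of x S' R']
        by (auto simp: F_def subst_syl_def)
    qed
  next
    case (rel r)
    then show ?case using wF by (auto simp: R'_def F_def intro: pres_eq.rel)
  qed
  have FH: "word_on S' w \<Longrightarrow> pres_eq S' R' (F (H w)) w" for w
  proof (induction w)
    case Nil then show ?case by (simp add: F_def pres_eq.refl)
  next
    case (Cons s w)
    obtain x k where s: "s = (x, k)" by (cases s)
    have "pres_eq S' R' (F (Hs s)) [s]"
    proof (cases "x = i")
      case True
      have "pres_eq S' R' [(i, b * (q * k)), (i, - a * (- p * k))] [(i, b * (q * k) + - a * (- p * k))]"
        using iS' by (rule pres_eq.merge)
      moreover have "b * (q * k) + - a * (- p * k) = k"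
      proof -
        have "b * (q * k) + - a * (- p * k) = k * (p * a + q * b)" by (simp add: algebra_simps)
        then show ?thesis using pq by simp
      qed
      ultimately show ?thesis using True gh by (simp add: s Hs_def F_def subst_syl_def)
    next
      case False
      then have "x \<noteq> g" "x \<noteq> h" "x \<in> S'" using Cons.prems s by (auto simp: S'_def)
      then show ?thesis using False by (simp add: s Hs_def F_def subst_syl_def pres_eq.refl)
    qed
    then have "pres_eq S' R' (F (Hs s) @ F (H w)) ([s] @ w)"
      using Cons by (intro pres_eq.app) auto
    then show ?case by (simp add: F_def)
  qed
  have charP: "pres_eq S' R' u v \<Longrightarrow> (\<forall>j<n. vecE E' u j = vecE E' v j)" for u v
  proof (induction rule: pres_eq.induct)
    case (merge x a1 b1) then show ?case by (simp add: distrib_right)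
  next
    case (rel r)
    then obtain r0 where r0: "r0 \<in> R" "r = F r0" by (auto simp: R'_def)
    have w0: "word_on S r0" using tp r0 by (auto simp: three_presentation_def)
    have "pres_eq S R r0 []" using r0 w0 by (intro pres_eq.rel)
    then have "vr n E r0 = vr n E []" using char w0 by simp
    then show ?case using vecF[OF w0] r0 by (simp add: vr_eq)
  qed auto
  have iso: "pres_group S' R' \<cong> Zn n"
  proof (rule vec_to_iso[where E = E'])
    fix u v assume u: "word_on S' u" and v: "word_on S' v"
    show "pres_eq S' R' u v \<longleftrightarrow> vr n E' u = vr n E' v"
    proof
      assume "pres_eq S' R' u v" then show "vr n E' u = vr n E' v" using charP by (simp add: vr_eq)
    next
      assume "vr n E' u = vr n E' v"
      then have "vr n E (H u) = vr n E (H v)" by (simp add: vr_eq vecH)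
      then have "pres_eq S R (H u) (H v)" using char wH u v by simp
      then have "pres_eq S' R' (F (H u)) (F (H v))" by (rule presF)
      then show "pres_eq S' R' u v" using FH[OF u] FH[OF v] by (meson pres_eq.sym pres_eq.trans)
    qed
  next
    fix z assume "z \<in> carrier (Zn n)"
    then obtain w where w: "word_on S w" "z = vr n E w" using surj by blast
    have eqv: "vr n E' (F w) = vr n E w" 
      unfolding vr_def using vecF[OF w(1)] by (intro restrict_ext) auto
    show "\<exists>w. word_on S' w \<and> z = vr n E' w"
    proof (intro exI conjI)
      show "word_on S' (F w)" using wF w(1) by blast
      show "z = vr n E' (F w)" using eqv w(2) by simp
    qed
  qed
  have "three_presentation S' R'"
    unfolding three_presentation_def
  proof (intro conjI ballI)
    show "finite S'" using tp by (simp add: three_presentation_def S'_def)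
    show "finite R'" using tp by (simp add: three_presentation_def R'_def)
  next
    fix r assume "r \<in> R'"
    then obtain r0 where r0: "r0 \<in> R" "r = F r0" by (auto simp: R'_def)
    then have "word_on S r0" "length r0 \<le> 3" using tp by (auto simp: three_presentation_def)
    then show "word_on S' r" "length r \<le> 3" using wF r0 by (simp_all add: F_def)
  qed
  then show ?thesis using iso by (simp add: S'_def R'_def F_def)
qed

end
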